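(* Any quadric which vanishes on $W_d$ is a linear combination of elements of $\mathcal{D}$.
   Context: Let $P_d$ be a convex polygon with $d\ge 4$ vertices $v_1,\dots,v_d$ (indices mod $d$) over a field $\mathbb{K}$ with no three edge lines concurrent. With ${\bf v}_i=(v_i,1)$, $\alpha_j=|{\bf v}_{j-1}\,{\bf v}_j\,{\bf v}_{j+1}|$, $\ell_j=|{\bf v}_j\,{\bf v}_{j+1}\,{\bf p}|$, ${\bf p}=(x,y,z)$, $b_i=\alpha_i\prod_{j\ne i-1,i}\ell_j$, the Wachspress surface $W_d\subseteq\mathbb{P}^{d-1}$ is the closure of the image of $p\mapsto(b_1,\dots,b_d)$. In $S=\mathbb{K}[x_1,\ldots,x_d]$, a diagonal monomial is $x_ix_j$ with $j\notin\{i-1,i,i+1\}$, and $\mathcal{D}\subseteq S_2$ is the span of the diagonal monomials. *)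

theory Defs
  imports Main
begin

text \<open>Points of the plane are pairs; homogeneous points are triples.
  Vertices are indexed by 0..d-1 (the paper's v_1..v_d shifted), indices taken mod d.\<close>

definition det3 :: "'a::comm_ring_1 \<times> 'a \<times> 'a \<Rightarrow> 'a \<times> 'a \<times> 'a \<Rightarrow> 'a \<times> 'a \<times> 'a \<Rightarrow> 'a" where
  "det3 u v w = (case u of (u1,u2,u3) \<Rightarrow> case v of (v1,v2,v3) \<Rightarrow> case w of (w1,w2,w3) \<Rightarrow>
      u1*(v2*w3 - v3*w2) - u2*(v1*w3 - v3*w1) + u3*(v1*w2 - v2*w1))"

definition hom :: "'a::comm_ring_1 \<times> 'a \<Rightarrow> 'a \<times> 'a \<times> 'a" where
  "hom p = (fst p, snd p, 1)"

definition vtx :: "nat \<Rightarrow> (nat \<Rightarrow> 'a::comm_ring_1 \<times> 'a) \<Rightarrow> nat \<Rightarrow> 'a \<times> 'a \<times> 'a" where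
  "vtx d v i = hom (v (i mod d))"

text \<open>Strictly convex polygon with vertices in cyclic order: every vertex not on the edge
  v_i v_{i+1} lies strictly on the same side of that edge line, with a uniform orientation.\<close>
definition convex_polygon :: "nat \<Rightarrow> (nat \<Rightarrow> 'a::linordered_field \<times> 'a) \<Rightarrow> bool" where
  "convex_polygon d v \<longleftrightarrow> d \<ge> 3 \<and>
     ((\<forall>i<d. \<forall>k<d. k \<noteq> i \<and> k \<noteq> (i+1) mod d \<longrightarrow> det3 (vtx d v i) (vtx d v (i+1)) (vtx d v k) > 0) \<or>
      (\<forall>i<d. \<forall>k<d. k \<noteq> i \<and> k \<noteq> (i+1) mod d \<longrightarrow> det3 (vtx d v i) (vtx d v (i+1)) (vtx d v k) < 0))"

definition edge_form :: "nat \<Rightarrow> (nat \<Rightarrow> 'a::comm_ring_1 \<times> 'a) \<Rightarrow> nat \<Rightarrow> 'a \<times> 'a \<times> 'a \<Rightarrow> 'a" where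
  "edge_form d v j p = det3 (vtx d v j) (vtx d v (j+1)) p"

definition no_three_concurrent :: "nat \<Rightarrow> (nat \<Rightarrow> 'a::comm_ring_1 \<times> 'a) \<Rightarrow> bool" where
  "no_three_concurrent d v \<longleftrightarrow>
     (\<forall>i<d. \<forall>j<d. \<forall>k<d. \<forall>p. i \<noteq> j \<and> i \<noteq> k \<and> j \<noteq> k \<and> p \<noteq> (0,0,0) \<longrightarrow>
        \<not> (edge_form d v i p = 0 \<and> edge_form d v j p = 0 \<and> edge_form d v k p = 0))"

definition alpha :: "nat \<Rightarrow> (nat \<Rightarrow> 'a::comm_ring_1 \<times> 'a) \<Rightarrow> nat \<Rightarrow> 'a" where
  "alpha d v j = det3 (vtx d v (j + d - 1)) (vtx d v j) (vtx d v (j+1))"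

definition wach :: "nat \<Rightarrow> (nat \<Rightarrow> 'a::comm_ring_1 \<times> 'a) \<Rightarrow> nat \<Rightarrow> 'a \<times> 'a \<times> 'a \<Rightarrow> 'a" where
  "wach d v i p = alpha d v i *
     (\<Prod>j\<in>{0..<d} - {(i + d - 1) mod d, i mod d}. edge_form d v j p)"

text \<open>A quadric in S = K[x_0..x_{d-1}], given by its coefficients q i j on the monomials
  x_i x_j with i \<le> j < d.\<close>
definition quad_eval :: "nat \<Rightarrow> (nat \<Rightarrow> nat \<Rightarrow> 'a::comm_ring_1) \<Rightarrow> (nat \<Rightarrow> 'a) \<Rightarrow> 'a" where
  "quad_eval d q x = (\<Sum>i<d. \<Sum>j\<in>{i..<d}. q i j * x i * x j)"

text \<open>Vanishing on W_d (closure of the image of p \<mapsto> (b_1,...,b_d)); a form vanishes on the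
  Zariski closure of a set iff it vanishes on the set, and the cone over the image is
  the set of all (b_i(p))_i.\<close>
definition vanishes_on_W :: "nat \<Rightarrow> (nat \<Rightarrow> 'a::comm_ring_1 \<times> 'a) \<Rightarrow> (nat \<Rightarrow> nat \<Rightarrow> 'a) \<Rightarrow> bool" where
  "vanishes_on_W d v q \<longleftrightarrow> (\<forall>p. quad_eval d q (\<lambda>i. wach d v i p) = 0)"

definition diagonal_monomial :: "nat \<Rightarrow> nat \<Rightarrow> nat \<Rightarrow> bool" where
  "diagonal_monomial d i j \<longleftrightarrow> j \<noteq> i \<and> j \<noteq> (i+1) mod d \<and> i \<noteq> (j+1) mod d"

definition in_diag_span :: "nat \<Rightarrow> (nat \<Rightarrow> nat \<Rightarrow> 'a::zero) \<Rightarrow> bool" where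
  "in_diag_span d q \<longleftrightarrow> (\<forall>i<d. \<forall>j\<in>{i..<d}. \<not> diagonal_monomial d i j \<longrightarrow> q i j = 0)"

end

theory Submission
  imports Defs
begin

lemma suc_mod: "(m::nat) < d \<Longrightarrow> (m+1) mod d = (if m+1 = d then 0 else m+1)"
proof (cases "m+1 = d")
  case True thus ?thesis by simp
next
  case False
  assume "m < d" hence "m+1 < d" using False by simp
  thus ?thesis using False by (simp only: mod_less if_False)
qed

lemma pred_mod: "(m::nat) < d \<Longrightarrow> (m+d-1) mod d = (if m = 0 then d-1 else m-1)"
proof (cases "m = 0")
  case True
  assume "m < d" hence "d - 1 < d" by linarith
  thus ?thesis using True by (simp add: mod_less)
next
  case False
  assume "m < d"
  hence "m+d-1 = (m-1) + d" using False by simp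
  hence "(m+d-1) mod d = (m-1) mod d" by simp
  thus ?thesis using False \<open>m<d\<close> by simp
qed

lemma vtx_mod: "vtx d v k = vtx d v (k mod d)"
  by (simp add: vtx_def)

lemma vtx_less: "k < d \<Longrightarrow> vtx d v k = (fst (v k), snd (v k), 1)"
  by (simp add: vtx_def hom_def)

lemma ef_add: "edge_form d v j (x1+y1, x2+y2, x3+y3) = edge_form d v j (x1,x2,x3) + edge_form d v j (y1,y2,y3)"
  unfolding edge_form_def det3_def
  by (cases "vtx d v j"; cases "vtx d v (j+1)") (simp add: algebra_simps)

lemma det3_rep1: "det3 a b a = 0"
  unfolding det3_def by (cases a; cases b) (simp add: algebra_simps)
lemma det3_rep2: "det3 a b b = 0"
  unfolding det3_def by (cases a; cases b) (simp add: algebra_simps)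

lemma sign_exists:
  fixes v :: "nat \<Rightarrow> 'a::linordered_field \<times> 'a"
  assumes "convex_polygon d v"
  shows "\<exists>\<sigma>::'a. \<forall>i<d. \<forall>k<d. k \<noteq> i \<and> k \<noteq> (i+1) mod d \<longrightarrow> \<sigma> * edge_form d v i (vtx d v k) > 0"
proof -
  from assms have "(\<forall>i<d. \<forall>k<d. k \<noteq> i \<and> k \<noteq> (i+1) mod d \<longrightarrow> det3 (vtx d v i) (vtx d v (i+1)) (vtx d v k) > 0) \<or>
      (\<forall>i<d. \<forall>k<d. k \<noteq> i \<and> k \<noteq> (i+1) mod d \<longrightarrow> det3 (vtx d v i) (vtx d v (i+1)) (vtx d v k) < 0)"
    unfolding convex_polygon_def by blast
  thus ?thesis
  proof
    assume h: "\<forall>i<d. \<forall>k<d. k \<noteq> i \<and> k \<noteq> (i+1) mod d \<longrightarrow> det3 (vtx d v i) (vtx d v (i+1)) (vtx d v k) > 0"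
    show ?thesis
    proof (intro exI allI impI)
      fix i k assume a: "i < d" "k < d" "k \<noteq> i \<and> k \<noteq> (i+1) mod d"
      from h[rule_format, OF a] show "(1::'a) * edge_form d v i (vtx d v k) > 0"
        by (simp only: edge_form_def mult_1_left)
    qed
  next
    assume h: "\<forall>i<d. \<forall>k<d. k \<noteq> i \<and> k \<noteq> (i+1) mod d \<longrightarrow> det3 (vtx d v i) (vtx d v (i+1)) (vtx d v k) < 0"
    show ?thesis
    proof (intro exI allI impI)
      fix i k assume a: "i < d" "k < d" "k \<noteq> i \<and> k \<noteq> (i+1) mod d"
      from h[rule_format, OF a] show "(-1::'a) * edge_form d v i (vtx d v k) > 0"
        by (simp add: edge_form_def)
    qed
  qed
qed

lemma ef_zero_vtx:
  assumes "j < d" "k = j \<or> k = (if j+1 = d then 0 else j+1)"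
  shows "edge_form d v j (vtx d v k) = 0"
proof -
  have e: "vtx d v (j+1) = vtx d v (if j+1 = d then 0 else j+1)"
    using vtx_mod[of d v "j+1"] suc_mod[OF assms(1)] by simp
  from assms(2) show ?thesis
  proof
    assume "k = j" thus ?thesis unfolding edge_form_def by (simp only: det3_rep1)
  next
    assume "k = (if j+1 = d then 0 else j+1)"
    hence "vtx d v k = vtx d v (j+1)" using e by simp
    thus ?thesis unfolding edge_form_def by (simp only: det3_rep2)
  qed
qed

lemma quad1:
  fixes q :: "nat \<Rightarrow> nat \<Rightarrow> 'a::comm_ring_1"
  assumes "a < d" "\<forall>i<d. i \<noteq> a \<longrightarrow> x i = 0"
  shows "quad_eval d q x = q a a * x a * x a"
proof -
  let ?g = "\<lambda>i. \<Sum>j\<in>{i..<d}. q i j * x i * x j"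
  have "quad_eval d q x = ?g a + sum ?g ({..<d} - {a})"
    unfolding quad_eval_def using assms(1) by (intro sum.remove) auto
  also have "sum ?g ({..<d} - {a}) = 0"
    using assms(2) by (intro sum.neutral) auto
  also have "?g a = q a a * x a * x a + (\<Sum>j\<in>{a..<d} - {a}. q a j * x a * x j)"
    using assms(1) by (intro sum.remove) auto
  also have "(\<Sum>j\<in>{a..<d} - {a}. q a j * x a * x j) = 0"
    using assms(2) by (intro sum.neutral) auto
  finally show ?thesis by simp
qed

lemma quad2:
  fixes q :: "nat \<Rightarrow> nat \<Rightarrow> 'a::comm_ring_1"
  assumes "a < b" "b < d" "\<forall>i<d. i \<noteq> a \<and> i \<noteq> b \<longrightarrow> x i = 0"
  shows "quad_eval d q x = q a a * x a * x a + q a b * x a * x b + q b b * x b * x b"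
proof -
  let ?g = "\<lambda>i. \<Sum>j\<in>{i..<d}. q i j * x i * x j"
  have "quad_eval d q x = ?g a + sum ?g ({..<d} - {a})"
    unfolding quad_eval_def using assms by (intro sum.remove) auto
  also have "sum ?g ({..<d} - {a}) = ?g b + sum ?g ({..<d} - {a} - {b})"
    using assms by (intro sum.remove) auto
  also have "sum ?g ({..<d} - {a} - {b}) = 0"
    using assms(3) by (intro sum.neutral) auto
  also have "?g a = q a a * x a * x a + (\<Sum>j\<in>{a..<d} - {a}. q a j * x a * x j)"
    using assms by (intro sum.remove) auto
  also have "(\<Sum>j\<in>{a..<d} - {a}. q a j * x a * x j) = q a b * x a * x b + (\<Sum>j\<in>{a..<d} - {a} - {b}. q a j * x a * x j)"
    using assms by (intro sum.remove) auto
  also have "(\<Sum>j\<in>{a..<d} - {a} - {b}. q a j * x a * x j) = 0"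
    using assms(3) by (intro sum.neutral) auto
  also have "?g b = q b b * x b * x b + (\<Sum>j\<in>{b..<d} - {b}. q b j * x b * x j)"
    using assms by (intro sum.remove) auto
  also have "(\<Sum>j\<in>{b..<d} - {b}. q b j * x b * x j) = 0"
    using assms by (intro sum.neutral) auto
  finally show ?thesis by (simp add: algebra_simps)
qed


definition sgnok :: "nat \<Rightarrow> (nat \<Rightarrow> 'a::linordered_field \<times> 'a) \<Rightarrow> 'a \<Rightarrow> bool" where
  "sgnok d v \<sigma> \<longleftrightarrow> (\<forall>i<d. \<forall>k<d. k \<noteq> i \<and> k \<noteq> (i+1) mod d \<longrightarrow> \<sigma> * edge_form d v i (vtx d v k) > 0)"

lemma ef_pos:
  assumes "sgnok d v \<sigma>" "j < d" "k < d" "k \<noteq> j" "k \<noteq> (if j+1 = d then 0 else j+1)"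
  shows "\<sigma> * edge_form d v j (vtx d v k) > 0"
  using assms suc_mod[OF assms(2)] unfolding sgnok_def by simp

lemma ef_nonneg:
  assumes "sgnok d v \<sigma>" "j < d" "k < d"
  shows "\<sigma> * edge_form d v j (vtx d v k) \<ge> 0"
proof (cases "k = j \<or> k = (if j+1 = d then 0 else j+1)")
  case True thus ?thesis by (simp add: ef_zero_vtx[OF assms(2) True])
next
  case False thus ?thesis using ef_pos[OF assms] by (simp add: less_imp_le)
qed

lemma idx_set:
  assumes "(k::nat) < d"
  shows "{0..<d} - {(k + d - 1) mod d, k mod d} = {0..<d} - {(if k = 0 then d-1 else k-1), k}"
  using pred_mod[OF assms] assms by simp

lemma alpha_nz:
  fixes v :: "nat \<Rightarrow> 'a::linordered_field \<times> 'a"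
  assumes "sgnok d v \<sigma>" "d \<ge> 3" "m < d"
  shows "alpha d v m \<noteq> 0"
proof -
  define P where "P = (if m = 0 then d-1 else m-1)"
  define S where "S = (if m+1 = d then 0 else m+1)"
  have P: "P < d" using assms unfolding P_def by auto
  have S: "S < d" using assms unfolding S_def by auto
  have "alpha d v m = det3 (vtx d v P) (vtx d v m) (vtx d v S)"
    unfolding alpha_def P_def S_def
    using vtx_mod[of d v "m+d-1"] vtx_mod[of d v "m+1"] pred_mod[OF assms(3)] suc_mod[OF assms(3)]
    by simp
  also have "vtx d v m = vtx d v (P+1)"
  proof -
    have "(P+1) mod d = m" using assms unfolding P_def by auto
    thus ?thesis using vtx_mod[of d v "P+1"] by simp
  qed
  finally have a: "alpha d v m = edge_form d v P (vtx d v S)" unfolding edge_form_def .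
  have "\<sigma> * edge_form d v P (vtx d v S) > 0"
    by (rule ef_pos[OF assms(1) P S]) (use assms in \<open>auto simp: P_def S_def\<close>)
  thus ?thesis using a by auto
qed

lemma wach_vtx_zero:
  fixes v :: "nat \<Rightarrow> 'a::linordered_field \<times> 'a"
  assumes "d \<ge> 3" "m < d" "k < d" "k \<noteq> m"
  shows "wach d v k (vtx d v m) = 0"
proof -
  define P where "P = (if k = 0 then d-1 else k-1)"
  have ex: "\<exists>j\<in>{0..<d} - {P, k}. edge_form d v j (vtx d v m) = 0"
  proof (cases "k = (if m+1 = d then 0 else m+1)")
    case True
    define j where "j = (if m = 0 then d-1 else m-1)"
    have "j \<in> {0..<d} - {P, k}" using assms True unfolding j_def P_def by auto
    moreover have "edge_form d v j (vtx d v m) = 0"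
      by (rule ef_zero_vtx) (use assms in \<open>auto simp: j_def\<close>)
    ultimately show ?thesis by blast
  next
    case False
    have "m \<in> {0..<d} - {P, k}" using assms False unfolding P_def by auto
    moreover have "edge_form d v m (vtx d v m) = 0"
      by (rule ef_zero_vtx) (use assms in auto)
    ultimately show ?thesis by blast
  qed
  show ?thesis unfolding wach_def idx_set[OF assms(3)] P_def[symmetric]
    using ex by auto
qed

lemma wach_vtx_nz:
  fixes v :: "nat \<Rightarrow> 'a::linordered_field \<times> 'a"
  assumes "sgnok d v \<sigma>" "d \<ge> 3" "m < d"
  shows "wach d v m (vtx d v m) \<noteq> 0"
proof -
  define P where "P = (if m = 0 then d-1 else m-1)"
  have "\<forall>j\<in>{0..<d} - {P, m}. edge_form d v j (vtx d v m) \<noteq> 0"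
  proof
    fix j assume j: "j \<in> {0..<d} - {P, m}"
    have "\<sigma> * edge_form d v j (vtx d v m) > 0"
      by (rule ef_pos[OF assms(1)]) (use assms j in \<open>auto simp: P_def split: if_splits\<close>)
    thus "edge_form d v j (vtx d v m) \<noteq> 0" by auto
  qed
  thus ?thesis unfolding wach_def idx_set[OF assms(3)] P_def[symmetric]
    using alpha_nz[OF assms] by auto
qed


lemma edge_q_zero:
  fixes v :: "nat \<Rightarrow> 'a::linordered_field \<times> 'a" and q :: "nat \<Rightarrow> nat \<Rightarrow> 'a"
  assumes sg: "sgnok d v \<sigma>" and d: "d \<ge> 4" and e: "e < d" and van: "vanishes_on_W d v q"
    and diag: "\<forall>m<d. q m m = 0"
  shows "q (min e (if e+1 = d then 0 else e+1)) (max e (if e+1 = d then 0 else e+1)) = 0"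
proof -
  define e' where "e' = (if e+1 = d then 0 else e+1)"
  have e': "e' < d" "e' \<noteq> e" using d e unfolding e'_def by auto
  define p where "p = (fst (v e) + fst (v e'), snd (v e) + snd (v e'), (1::'a) + 1)"
  have efp: "edge_form d v j p = edge_form d v j (vtx d v e) + edge_form d v j (vtx d v e')" for j
    unfolding p_def vtx_less[OF e] vtx_less[OF e'(1)] by (rule ef_add)
  have z: "wach d v k p = 0" if k: "k < d" "k \<noteq> e" "k \<noteq> e'" for k
  proof -
    have "e \<in> {0..<d} - {(if k = 0 then d-1 else k-1), k}"
      using k e d unfolding e'_def by auto
    moreover have "edge_form d v e p = 0"
    proof -
      have "edge_form d v e (vtx d v e) = 0" by (rule ef_zero_vtx[OF e]) simp
      moreover have "edge_form d v e (vtx d v e') = 0" by (rule ef_zero_vtx[OF e]) (simp add: e'_def)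
      ultimately show ?thesis unfolding efp by simp
    qed
    ultimately show ?thesis unfolding wach_def idx_set[OF k(1)] by auto
  qed
  have nzj: "edge_form d v j p \<noteq> 0" if j: "j < d" "j \<noteq> e" for j
  proof -
    have n1: "\<sigma> * edge_form d v j (vtx d v e) \<ge> 0" by (rule ef_nonneg[OF sg j(1) e])
    have n2: "\<sigma> * edge_form d v j (vtx d v e') \<ge> 0" by (rule ef_nonneg[OF sg j(1) e'(1)])
    have "\<sigma> * edge_form d v j (vtx d v e) > 0 \<or> \<sigma> * edge_form d v j (vtx d v e') > 0"
    proof (cases "e = (if j+1 = d then 0 else j+1)")
      case True
      have "\<sigma> * edge_form d v j (vtx d v e') > 0"
        by (rule ef_pos[OF sg j(1) e'(1)]) (use True d e j in \<open>auto simp: e'_def split: if_splits\<close>)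
      thus ?thesis ..
    next
      case False
      have "\<sigma> * edge_form d v j (vtx d v e) > 0"
        by (rule ef_pos[OF sg j(1) e]) (use False j in auto)
      thus ?thesis ..
    qed
    hence "\<sigma> * edge_form d v j p > 0" using n1 n2 unfolding efp by (auto simp: distrib_left)
    thus ?thesis by auto
  qed
  have d3: "d \<ge> 3" using d by simp
  have w1: "wach d v e p \<noteq> 0"
  proof -
    have "\<forall>j\<in>{0..<d} - {(if e = 0 then d-1 else e-1), e}. edge_form d v j p \<noteq> 0"
      using nzj by auto
    thus ?thesis unfolding wach_def idx_set[OF e] using alpha_nz[OF sg d3 e] by auto
  qed
  have w2: "wach d v e' p \<noteq> 0"
  proof -
    have pe: "(if e' = 0 then d-1 else e'-1) = e" using e d unfolding e'_def by auto
    have "\<forall>j\<in>{0..<d} - {(if e' = 0 then d-1 else e'-1), e'}. edge_form d v j p \<noteq> 0"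
      unfolding pe using nzj by auto
    thus ?thesis unfolding wach_def idx_set[OF e'(1)] using alpha_nz[OF sg d3 e'(1)] by auto
  qed
  define x where "x = (\<lambda>i. wach d v i p)"
  define a where "a = min e e'"
  define b where "b = max e e'"
  have ab: "a < b" "b < d" using e e' unfolding a_def b_def by auto
  have "quad_eval d q x = q a a * x a * x a + q a b * x a * x b + q b b * x b * x b"
    by (rule quad2[OF ab]) (use z in \<open>auto simp: x_def a_def b_def min_def max_def\<close>)
  moreover have "quad_eval d q x = 0" using van unfolding vanishes_on_W_def x_def by blast
  moreover have "q a a = 0" "q b b = 0" using diag ab by auto
  moreover have "x a \<noteq> 0" "x b \<noteq> 0" using w1 w2 unfolding x_def a_def b_def min_def max_def by auto
  ultimately have "q a b = 0" by simp
  thus ?thesis unfolding a_def b_def e'_def .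
qed

theorem lemma3p1:
  fixes d :: nat and v :: "nat \<Rightarrow> 'a::linordered_field \<times> 'a" and q :: "nat \<Rightarrow> nat \<Rightarrow> 'a"
  assumes "d \<ge> 4"
    and "convex_polygon d v"
    and "no_three_concurrent d v"
    and "vanishes_on_W d v q"
  shows "in_diag_span d q"
proof -
  obtain \<sigma> where sg: "sgnok d v \<sigma>" using sign_exists[OF assms(2)] unfolding sgnok_def by blast
  have d3: "d \<ge> 3" using assms(1) by simp
  have diag: "\<forall>m<d. q m m = 0"
  proof (intro allI impI)
    fix m assume m: "m < d"
    define x where "x = (\<lambda>i. wach d v i (vtx d v m))"
    have "quad_eval d q x = q m m * x m * x m"
      by (rule quad1[OF m]) (use wach_vtx_zero[OF d3 m] in \<open>auto simp: x_def\<close>)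
    moreover have "quad_eval d q x = 0" using assms(4) unfolding vanishes_on_W_def x_def by blast
    moreover have "x m \<noteq> 0" using wach_vtx_nz[OF sg d3 m] unfolding x_def .
    ultimately show "q m m = 0" by simp
  qed
  show ?thesis unfolding in_diag_span_def
  proof (intro allI impI ballI)
    fix i j assume i: "i < d" and j: "j \<in> {i..<d}" and nd: "\<not> diagonal_monomial d i j"
    have jd: "j < d" "i \<le> j" using j by auto
    show "q i j = 0"
    proof (cases "j = i")
      case True thus ?thesis using diag i by simp
    next
      case False
      have "j = i + 1 \<or> (i = 0 \<and> j = d - 1)"
        using nd False jd i suc_mod[OF i] suc_mod[OF jd(1)] unfolding diagonal_monomial_def
        by (auto split: if_splits)
      thus ?thesis
      proof
        assume "j = i + 1"
        hence "i + 1 \<noteq> d" "j = i+1" using jd by auto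
        thus ?thesis using edge_q_zero[OF sg assms(1) i assms(4) diag] by simp
      next
        assume h: "i = 0 \<and> j = d - 1"
        have "d - 1 < d" using assms(1) by simp
        from edge_q_zero[OF sg assms(1) this assms(4) diag] h assms(1) show ?thesis by simp
      qed
    qed
  qed
qed

end
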